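(* Let $p$ be a prime, $n\ge 1$, and let $F\otimes_{ku_*}ku_*(\mathbb{Z}_{p^n})$ and the elements $[a,b]$ be as described in the context. For every integer $k\ge 0$, every integer $a$ and every integer $b$ with $1\le b\le (k+1)g_1$, where $g_1=p-1$, one has $$p^{n+k}[a,b]=0 \quad\text{in } F\otimes_{ku_*}ku_*(\mathbb{Z}_{p^n}).$$
   Context: Fix a prime $p$. Let $ku_*=\mathbb{Z}_{(p)}[v]$ be the $p$-local coefficient ring of connective complex $K$-theory, $v$ of degree $2$. Write $g_i=p^i-1$. For $m\ge1$ and $0\le t\le p^m-1$ put $a_{t,m}=\binom{p^m}{t+1}v^t\in ku_*$ (the coefficients of the $[p^m]$-series $[p^m](x)=\sum_t a_{t,m}x^{t+1}$). The reduced homology $ku_*(\mathbb{Z}_{p^n})$ (of $B\mathbb{Z}/p^n$) is the $ku_*$-module generated by classes $e_j$, $j\ge1$, subject to the relations $\sum_{t=0}^{p^n-1}a_{t,n}e_{j-t}=0$ for all $j\ge1$, where $e_h=0$ for $h\le 0$. Let $F=\bigoplus_{i\ge1}ku_*\alpha_i$ be the free $ku_*$-module on generators $\alpha_i$, with $\alpha_h=0$ for $h\le0$. For integers $i,j$ write $[i,j]=\alpha_i\otimes e_j\in F\otimes_{ku_*}ku_*(\mathbb{Z}_{p^n})$ (so $[i,j]=0$ if $i\le0$ or $j\le0$), and $c[i,j]=c\,\alpha_i\otimes e_j$ for $c\in ku_*$. *)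

theory Defs
  imports "HOL-Computational_Algebra.Polynomial"
begin

text \<open>The p-local integers Z_(p), as a subset of the rationals.\<close>
definition Zloc :: "nat \<Rightarrow> rat set" where
  "Zloc p = {q. coprime (snd (quotient_of q)) (int p)}"

text \<open>ku_* = Z_(p)[v], as polynomials in v with Z_(p) coefficients.\<close>
definition ku :: "nat \<Rightarrow> rat poly set" where
  "ku p = {f. \<forall>i. coeff f i \<in> Zloc p}"

definition acoef :: "nat \<Rightarrow> nat \<Rightarrow> nat \<Rightarrow> rat poly" where
  "acoef p t m = monom (of_nat ((p ^ m) choose (t + 1))) t"

text \<open>Elements of the free ku_*-module on the symbols [i,j] are represented as
  functions int \<times> int \<Rightarrow> ku_* (coefficient of [i,j]); only i,j \<ge> 1 are genuine
  generators.  The relation element for generator alpha_i and index j: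
  sum_{t=0}^{p^n-1} a_{t,n} [i, j-t], with [i,h] = 0 for h \<le> 0.\<close>
definition relvec :: "nat \<Rightarrow> nat \<Rightarrow> int \<Rightarrow> int \<Rightarrow> (int \<times> int \<Rightarrow> rat poly)" where
  "relvec p n i j = (\<lambda>(i', j'). if i' = i \<and> 1 \<le> j' \<and> 0 \<le> j - j' \<and> j - j' \<le> int (p ^ n) - 1
        then acoef p (nat (j - j')) n else 0)"

inductive_set relsub :: "nat \<Rightarrow> nat \<Rightarrow> (int \<times> int \<Rightarrow> rat poly) set" for p n where
  zero: "(\<lambda>_. 0) \<in> relsub p n"
| step: "x \<in> relsub p n \<Longrightarrow> c \<in> ku p \<Longrightarrow> 1 \<le> i \<Longrightarrow> 1 \<le> j \<Longrightarrow>
         (\<lambda>ij. x ij + c * relvec p n i j ij) \<in> relsub p n"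

definition gen :: "rat poly \<Rightarrow> int \<Rightarrow> int \<Rightarrow> (int \<times> int \<Rightarrow> rat poly)" where
  "gen c a b = (\<lambda>ij. if ij = (a, b) \<and> 1 \<le> a \<and> 1 \<le> b then c else 0)"

text \<open>c[a,b] = 0 in F \<otimes>_{ku_*} ku_*(Z_{p^n}) (the quotient of the free module by relsub).\<close>
definition vanishes :: "nat \<Rightarrow> nat \<Rightarrow> rat poly \<Rightarrow> int \<Rightarrow> int \<Rightarrow> bool" where
  "vanishes p n c a b \<longleftrightarrow> gen c a b \<in> relsub p n"

end

theory Submission
  imports Defs "HOL-Computational_Algebra.Primes"
begin

definition IM :: "rat poly set" where
  "IM = {monom (of_int u) t | u t. True}"

inductive_set M :: "nat \<Rightarrow> nat \<Rightarrow> (int \<times> int \<Rightarrow> rat poly) set" for p n where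
  zero: "(\<lambda>_. 0) \<in> M p n"
| step: "x \<in> M p n \<Longrightarrow> c \<in> IM \<Longrightarrow> 1 \<le> i \<Longrightarrow> 1 \<le> j \<Longrightarrow>
         (\<lambda>ij. x ij + c * relvec p n i j ij) \<in> M p n"

lemma IM_mult: "c \<in> IM \<Longrightarrow> d \<in> IM \<Longrightarrow> c * d \<in> IM"
  unfolding IM_def by (auto simp: mult_monom) (metis of_int_mult)

lemma IM_monom: "monom (of_int u) t \<in> IM"
  unfolding IM_def by auto

lemma Zloc_int: "of_int u \<in> Zloc p"
  unfolding Zloc_def by simp

lemma IM_ku: "c \<in> IM \<Longrightarrow> c \<in> ku p"
  unfolding IM_def ku_def by (auto simp: coeff_monom Zloc_int) (metis Zloc_int of_int_0)

lemma M_relsub: "x \<in> M p n \<Longrightarrow> x \<in> relsub p n"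
  by (induction rule: M.induct) (auto intro: relsub.intros IM_ku)

lemma M_add: "y \<in> M p n \<Longrightarrow> x \<in> M p n \<Longrightarrow> (\<lambda>ij. x ij + y ij) \<in> M p n"
proof (induction rule: M.induct)
  case zero then show ?case by simp
next
  case (step y c i j)
  have "(\<lambda>ij. (x ij + y ij) + c * relvec p n i j ij) \<in> M p n"
    using step by (intro M.step) auto
  then show ?case by (simp add: add.assoc)
qed

lemma M_scale: "x \<in> M p n \<Longrightarrow> d \<in> IM \<Longrightarrow> (\<lambda>ij. d * x ij) \<in> M p n"
proof (induction rule: M.induct)
  case zero then show ?case by (simp add: M.zero)
next
  case (step x c i j)
  have "(\<lambda>ij. d * x ij + (d * c) * relvec p n i j ij) \<in> M p n"
    using step by (intro M.step IM_mult) auto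
  then show ?case by (simp add: algebra_simps)
qed

lemma M_neg: "x \<in> M p n \<Longrightarrow> (\<lambda>ij. - x ij) \<in> M p n"
proof -
  assume "x \<in> M p n"
  then have "(\<lambda>ij. monom (of_int (-1)) 0 * x ij) \<in> M p n"
    by (intro M_scale IM_monom)
  then show ?thesis by (simp add: monom_0)
qed

lemma M_sum: "finite T \<Longrightarrow> (\<forall>t\<in>T. f t \<in> M p n) \<Longrightarrow> (\<lambda>ij. \<Sum>t\<in>T. f t ij) \<in> M p n"
proof (induction T rule: finite_induct)
  case empty then show ?case by (simp add: M.zero)
next
  case (insert t T)
  then show ?case using M_add[of "f t" p n "\<lambda>ij. \<Sum>t\<in>T. f t ij"] by (simp add: add.commute)
qed

lemma M_rel: "c \<in> IM \<Longrightarrow> 1 \<le> i \<Longrightarrow> 1 \<le> j \<Longrightarrow> (\<lambda>ij. c * relvec p n i j ij) \<in> M p n"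
  using M.step[OF M.zero, of c i j p n] by simp

lemma gen_zero: "\<not> (1 \<le> a \<and> 1 \<le> b) \<Longrightarrow> gen c a b = (\<lambda>_. 0)"
  unfolding gen_def by auto

lemma gen_scale: "(\<lambda>ij. d * gen c a b ij) = gen (d * c) a b"
  unfolding gen_def by auto

lemma bern: "(p::nat) \<ge> 1 \<Longrightarrow> int p ^ s \<ge> 1 + int s * (int p - 1)"
proof (induction s)
  case 0 then show ?case by simp
next
  case (Suc s)
  have "int p ^ Suc s = int p * int p ^ s" by simp
  also have "\<dots> \<ge> int p * (1 + int s * (int p - 1))"
    using Suc by (intro mult_left_mono) auto
  finally have "int p ^ Suc s \<ge> int p * (1 + int s * (int p - 1))" .
  moreover have "int p * (1 + int s * (int p - 1)) \<ge> 1 + int (Suc s) * (int p - 1)"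
  proof -
    have "int p * (int s * (int p - 1)) \<ge> 1 * (int s * (int p - 1))"
      using Suc by (intro mult_right_mono) auto
    then show ?thesis by (simp add: algebra_simps)
  qed
  ultimately show ?case by linarith
qed

lemma decomp:
  assumes "prime (p::nat)" "m \<ge> 1"
  obtains s w where "m = p ^ s * w" "coprime p w"
proof -
  have m0: "m \<noteq> 0" using assms by auto
  have nu: "\<not> is_unit p" using assms(1) not_prime_unit by blast
  obtain w where w: "m = p ^ multiplicity p m * w" "\<not> p dvd w"
    by (rule multiplicity_decompose'[OF m0 nu])
  have "coprime p w" using w(2) assms(1) by (simp add: prime_imp_coprime)
  then show ?thesis by (rule that[OF w(1)])
qed

lemma binom_div:
  assumes p: "prime (p::nat)" and t: "t + 1 \<le> p ^ n"
  obtains s u where "s \<le> n" "p ^ s \<le> t + 1" "(p ^ n choose (t + 1)) = p ^ (n - s) * u"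
proof -
  obtain s w where sw: "t + 1 = p ^ s * w" "coprime p w"
    using decomp[OF p, of "t+1"] by auto
  have w0: "w \<ge> 1" using sw by (cases w) auto
  have ps: "p ^ s \<le> t + 1" using sw w0 by simp
  have p2: "p \<ge> 2" using p prime_ge_2_nat by blast
  have "p ^ s \<le> p ^ n" using ps t by linarith
  then have sn: "s \<le> n" using p2 by (simp add: power_le_imp_le_exp)
  define C where "C = p ^ n choose (t + 1)"
  define B where "B = (p ^ n - 1) choose t"
  have eq1: "(t + 1) * C = p ^ n * B"
    unfolding C_def B_def using times_binomial_minus1_eq[of "t+1" "p^n"] by simp
  have pn: "p ^ n = p ^ s * p ^ (n - s)" using sn by (simp add: power_add[symmetric])
  have "p ^ s * (w * C) = p ^ s * (p ^ (n - s) * B)"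
    using eq1 pn sw(1) by (metis mult.assoc)
  then have "w * C = p ^ (n - s) * B"
    using p2 by simp
  then have "p ^ (n - s) dvd w * C" by (metis dvd_triv_left)
  moreover have "coprime (p ^ (n - s)) w" using sw by simp
  ultimately have "p ^ (n - s) dvd C"
    using coprime_dvd_mult_right_iff by blast
  then have "p ^ (n - s) dvd (p ^ n choose (t + 1))" unfolding C_def .
  then show ?thesis using that sn ps by (metis dvdE)
qed

lemma rel_expand:
  assumes "1 \<le> a" "1 \<le> b"
  shows "(\<lambda>ij. monom P 0 * relvec p n a b ij) =
    (\<lambda>ij. \<Sum>t\<in>{0..<p^n}. gen (monom (P * of_nat (p ^ n choose (t + 1))) t) a (b - int t) ij)"
proof
  fix ij :: "int \<times> int"
  obtain i' j' where ij: "ij = (i', j')" by force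
  show "monom P 0 * relvec p n a b ij =
    (\<Sum>t\<in>{0..<p^n}. gen (monom (P * of_nat (p ^ n choose (t + 1))) t) a (b - int t) ij)"
  proof (cases "i' = a \<and> 1 \<le> j' \<and> 0 \<le> b - j' \<and> b - j' \<le> int (p ^ n) - 1")
    case True
    have "(\<Sum>t\<in>{0..<p^n}. gen (monom (P * of_nat (p ^ n choose (t + 1))) t) a (b - int t) ij)
      = (\<Sum>t\<in>{0..<p^n}. if nat (b - j') = t then monom (P * of_nat (p ^ n choose (t + 1))) t else 0)"
      using True assms by (intro sum.cong) (auto simp: gen_def ij)
    also have "\<dots> = monom (P * of_nat (p ^ n choose (nat (b - j') + 1))) (nat (b - j'))"
      using True by (simp add: sum.delta)
    finally show ?thesis using True
      by (simp add: relvec_def ij acoef_def mult_monom)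
  next
    case False
    have "(\<Sum>t\<in>{0..<p^n}. gen (monom (P * of_nat (p ^ n choose (t + 1))) t) a (b - int t) ij) = 0"
      using False by (intro sum.neutral) (auto simp: gen_def ij)
    moreover have "relvec p n a b ij = 0" using False unfolding relvec_def ij by auto
    ultimately show ?thesis by simp
  qed
qed

lemma main:
  assumes p: "prime p"
  shows "b \<le> int ((k + 1) * (p - 1)) \<Longrightarrow> gen (monom (of_int (int p ^ (n + k))) 0) a b \<in> M p n"
proof (induction "nat b" arbitrary: b k rule: less_induct)
  case less
  show ?case
  proof (cases "1 \<le> a \<and> 1 \<le> b")
    case False
    then show ?thesis by (simp add: gen_zero M.zero)
  next
    case True
    define f where "f t = gen (monom (of_int (int p ^ k) * of_nat (p ^ n choose (t + 1))) t) a (b - int t)" for t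
    have R: "(\<lambda>ij. monom (of_int (int p ^ k)) 0 * relvec p n a b ij) \<in> M p n"
      using True by (intro M_rel IM_monom) auto
    have E: "(\<lambda>ij. monom (of_int (int p ^ k)) 0 * relvec p n a b ij) = (\<lambda>ij. \<Sum>t\<in>{0..<p^n}. f t ij)"
      unfolding f_def using rel_expand True by blast
    have p2: "p \<ge> 2" using p prime_ge_2_nat by blast
    have pm1: "int (p - 1) = int p - 1" using p2 by simp
    have kk: "int ((k + 1) * (p - 1)) = (int k + 1) * (int p - 1)"
      by (simp only: of_nat_mult of_nat_add of_nat_1 pm1)
    have ins: "{0..<p^n} = insert 0 {1..<p^n}" using p2 by auto
    have f0: "f 0 = gen (monom (of_int (int p ^ (n + k))) 0) a b"
      unfolding f_def by (simp add: power_add mult.commute)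
    have T: "f t \<in> M p n" if t: "t \<in> {1..<p^n}" for t
    proof -
      obtain s u where su: "s \<le> n" "p ^ s \<le> t + 1" "(p ^ n choose (t + 1)) = p ^ (n - s) * u"
        using binom_div[OF p, of t n] t by auto
      have bs: "int p ^ s \<ge> 1 + int s * (int p - 1)" using bern p2 by auto
      have ps: "int p ^ s \<le> int t + 1" using su(2) by (metis of_nat_Suc of_nat_le_iff of_nat_power Suc_eq_plus1 add.commute)
      show ?thesis
      proof (cases "s \<le> k")
        case False
        note kk
        moreover have "(int k + 1) * (int p - 1) \<le> int s * (int p - 1)"
          using False p2 by (intro mult_right_mono) auto
        ultimately have "b - int t \<le> 0" using less.prems bs ps by linarith
        then show ?thesis unfolding f_def by (simp add: gen_zero M.zero)
      next
        case True
        note kk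
        moreover have "int ((k - s + 1) * (p - 1)) = (int k - int s + 1) * (int p - 1)"
          using True by (simp only: of_nat_mult of_nat_add of_nat_1 pm1 of_nat_diff)
        ultimately have bt: "b - int t \<le> int ((k - s + 1) * (p - 1))"
          using less.prems bs ps by (simp add: algebra_simps)
        have lt: "nat (b - int t) < nat b" using t \<open>1 \<le> a \<and> 1 \<le> b\<close> by auto
        have G: "gen (monom (of_int (int p ^ (n + (k - s)))) 0) a (b - int t) \<in> M p n"
          using less.hyps[OF lt bt] .
        have "(\<lambda>ij. monom (of_int (int u)) t * gen (monom (of_int (int p ^ (n + (k - s)))) 0) a (b - int t) ij) \<in> M p n"
          by (intro M_scale G IM_monom)
        moreover have "monom (of_int (int u)) t * monom (of_int (int p ^ (n + (k - s)))) 0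
             = (monom (of_int (int p ^ k) * of_nat (p ^ n choose (t + 1))) t :: rat poly)"
        proof -
          have e: "n + (k - s) = k + (n - s)" using True su(1) by simp
          have N: "u * p ^ (n + (k - s)) = p ^ k * (p ^ n choose (t + 1))"
            unfolding e su(3) power_add by (simp only: ac_simps)
          have Q: "(of_int (int u) * of_int (int p ^ (n + (k - s))) :: rat)
              = of_int (int p ^ k) * of_nat (p ^ n choose (t + 1))"
          proof -
            have "(of_nat (u * p ^ (n + (k - s))) :: rat) = of_nat (p ^ k * (p ^ n choose (t + 1)))"
              using N by (simp only:)
            then show ?thesis by (metis of_int_of_nat_eq of_nat_mult of_nat_power)
          qed
          show ?thesis
            using Q by (simp add: mult_monom)
        qed
        ultimately show ?thesis unfolding f_def gen_scale by (simp only: add_0_right)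
      qed
    qed
    have S: "(\<lambda>ij. \<Sum>t\<in>{1..<p^n}. f t ij) \<in> M p n"
      using T by (intro M_sum) auto
    have "(\<lambda>ij. monom (of_int (int p ^ k)) 0 * relvec p n a b ij + - (\<Sum>t\<in>{1..<p^n}. f t ij)) \<in> M p n"
      by (intro M_add[OF M_neg[OF S] R])
    moreover have "(\<lambda>ij. monom (of_int (int p ^ k)) 0 * relvec p n a b ij + - (\<Sum>t\<in>{1..<p^n}. f t ij)) = f 0"
    proof
      fix ij
      have "monom (of_int (int p ^ k)) 0 * relvec p n a b ij = (\<Sum>t\<in>{0..<p^n}. f t ij)"
        using fun_cong[OF E, of ij] by (simp only:)
      also have "\<dots> = f 0 ij + (\<Sum>t\<in>{1..<p^n}. f t ij)" by (subst ins, subst sum.insert) auto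
      finally show "monom (of_int (int p ^ k)) 0 * relvec p n a b ij + - (\<Sum>t\<in>{1..<p^n}. f t ij) = f 0 ij"
        by simp
    qed
    ultimately have "f 0 \<in> M p n" by (simp only:)
    then show ?thesis unfolding f0 .
  qed
qed

theorem lemma4p1:
  fixes p n k :: nat and a b :: int
  assumes "prime p" and "1 \<le> n"
    and "1 \<le> b" and "b \<le> int ((k + 1) * (p - 1))"
  shows "vanishes p n [:of_nat (p ^ (n + k)):] a b"
proof -
  have "gen (monom (of_int (int p ^ (n + k))) 0) a b \<in> M p n"
    using main[OF assms(1) assms(4)] .
  then have "gen (monom (of_int (int p ^ (n + k))) 0) a b \<in> relsub p n" by (rule M_relsub)
  then show ?thesis unfolding vanishes_def by (simp add: monom_0)
qed

end
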